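(* Let $\Phi$ be either the squared hinge loss $\Phi(u)=\max(1-u,0)^2$ or the modified Huber loss ($\Phi(u)=0$ for $u\ge1$, $\Phi(u)=-4u$ for $u\le-1$, $\Phi(u)=(1-u)^2$ otherwise). Then there do not exist a convex set $\bar{\mathcal{D}}\subseteq\mathbb{R}$ with $[0,1]\subseteq\bar{\mathcal{D}}$, a strictly convex differentiable $\bar h:\bar{\mathcal{D}}\to\mathbb{R}$ and a continuous bijection $\bar t:\bar{\mathcal{D}}\to\mathbb{R}$ such that $$q\Phi(v)+(1-q)\Phi(-v)-\inf_{v'\in\mathbb{R}}\big(q\Phi(v')+(1-q)\Phi(-v')\big)=D_{\bar h}(q,\bar t^{-1}(v))\quad\text{for all } v\in\mathbb{R},\,q\in[0,1].$$
   Context: $D_{\bar h}(a,b)=\bar h(a)-\bar h(b)-\bar h'(b)(a-b)$ denotes the Bregman divergence of $\bar h$. *)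

theory Defs
  imports "HOL-Analysis.Analysis"
begin

definition sq_hinge :: "real \<Rightarrow> real" where
  "sq_hinge u = (max (1 - u) 0)^2"

definition mod_huber :: "real \<Rightarrow> real" where
  "mod_huber u = (if u \<ge> 1 then 0 else if u \<le> -1 then -4 * u else (1 - u)^2)"

definition strict_convex_on :: "real set \<Rightarrow> (real \<Rightarrow> real) \<Rightarrow> bool" where
  "strict_convex_on S f \<longleftrightarrow>
     (\<forall>x\<in>S. \<forall>y\<in>S. \<forall>u::real. x \<noteq> y \<and> 0 < u \<and> u < 1 \<longrightarrow>
        f ((1 - u) * x + u * y) < (1 - u) * f x + u * f y)"

definition bregman :: "(real \<Rightarrow> real) \<Rightarrow> (real \<Rightarrow> real) \<Rightarrow> real \<Rightarrow> real \<Rightarrow> real" where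
  "bregman h h' a b = h a - h b - h' b * (a - b)"

end

theory Submission
  imports Defs
begin

lemma bregman_pos:
  assumes sc: "strict_convex_on D h" and conv: "convex D"
    and aD: "a \<in> D" and bD: "b \<in> D" and ab: "a \<noteq> b"
    and deriv: "\<forall>x\<in>D. (h has_real_derivative h' x) (at x within D)"
  shows "bregman h h' a b > 0"
proof -
  define g where "g u = h (b + u*(a-b))" for u
  have inD: "b + u*(a-b) \<in> D" if "0 \<le> u" "u \<le> 1" for u
  proof -
    have "(1-u)*b + u*a \<in> D" using convexD[OF conv bD aD, of "1-u" u] that by simp
    moreover have "(1-u)*b + u*a = b + u*(a-b)" by algebra
    ultimately show ?thesis by simp
  qed
  have img: "(\<lambda>u. b+u*(a-b)) ` {0..1} \<subseteq> D" using inD by auto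
  have d1: "((\<lambda>u. b+u*(a-b)) has_real_derivative (a-b)) (at 0 within {0..1})"
    by (auto intro!: derivative_eq_intros)
  have hb: "(h has_real_derivative h' b) (at ((\<lambda>u. b+u*(a-b)) 0) within ((\<lambda>u. b+u*(a-b)) ` {0..1}))"
    using DERIV_subset[OF deriv[rule_format, OF bD] img] by simp
  have dg: "(g has_real_derivative h' b * (a-b)) (at 0 within {0..1})"
    using DERIV_image_chain[OF hb d1] unfolding g_def comp_def by simp
  then have lim: "((\<lambda>u. (g u - g 0)/(u - 0)) \<longlongrightarrow> h' b * (a-b)) (at_right 0)"
    using has_field_derivative_iff at_within_Icc_at_right[of "0::real" 1] by force
  define m where "m = (a+b)/2"
  have mD: "m \<in> D" proof -
    have "m = b + (1/2)*(a-b)" unfolding m_def by (simp add: field_simps)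
    then show ?thesis using inD[of "1/2"] by simp
  qed
  have mb: "b \<noteq> m" using ab unfolding m_def by auto
  have strict: "g (1/2) < (g 0 + g 1)/2"
  proof -
    have "h ((1 - 1/2)*b + (1/2)*a) < (1 - 1/2) * h b + (1/2) * h a"
      using sc bD aD ab unfolding strict_convex_on_def by (metis field_sum_of_halves half_gt_zero zero_less_one add_cancel_right_right less_add_same_cancel1 not_one_less_zero)
    moreover have "(1 - 1/2)*b + (1/2)*a = b + (1/2)*(a-b)" by (simp add: field_simps)
    ultimately show ?thesis unfolding g_def by (simp add: field_simps)
  qed
  have bound: "\<forall>\<^sub>F u in at_right 0. (g u - g 0)/(u - 0) \<le> 2*(g (1/2) - g 0)"
    unfolding eventually_at_right_field
  proof (intro exI[of _ "1/2"] conjI allI impI)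
    show "(0::real) < 1/2" by simp
    fix u :: real assume u0: "0 < u" "u < 1/2"
    then have u: "0 < u \<and> u < 1/2" by simp
    have "h ((1 - 2*u)*b + (2*u)*m) < (1 - 2*u) * h b + (2*u) * h m"
      using sc bD mD mb u unfolding strict_convex_on_def by auto
    moreover have "(1 - 2*u)*b + (2*u)*m = b + u*(a-b)" unfolding m_def by algebra
    moreover have "m = b + (1/2)*(a-b)" unfolding m_def by (simp add: field_simps)
    ultimately have "g u < (1 - 2*u) * g 0 + (2*u) * g (1/2)" unfolding g_def by simp
    then have "g u - g 0 < u * (2*(g (1/2) - g 0))" by (simp add: algebra_simps)
    then show "(g u - g 0)/(u - 0) \<le> 2*(g (1/2) - g 0)" using u by (simp add: divide_simps mult.commute)
  qed
  have "h' b * (a-b) \<le> 2*(g (1/2) - g 0)"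
    by (rule tendsto_upperbound[OF lim bound]) simp
  also have "\<dots> < g 1 - g 0" using strict by simp
  finally show ?thesis unfolding bregman_def g_def by simp
qed

lemma Phi_props:
  assumes "\<Phi> = sq_hinge \<or> \<Phi> = mod_huber"
  shows "\<And>v. \<Phi> v \<ge> 0" and "\<And>v. v \<ge> 1 \<Longrightarrow> \<Phi> v = 0"
  using assms by (auto simp: sq_hinge_def mod_huber_def)

theorem propositionF1:
  fixes \<Phi> :: "real \<Rightarrow> real"
  assumes "\<Phi> = sq_hinge \<or> \<Phi> = mod_huber"
  shows "\<not> (\<exists>(D :: real set) (h :: real \<Rightarrow> real) (h' :: real \<Rightarrow> real) (t :: real \<Rightarrow> real).
            convex D \<and> {0..1} \<subseteq> D \<and>
            strict_convex_on D h \<and>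
            (\<forall>x\<in>D. (h has_real_derivative h' x) (at x within D)) \<and>
            continuous_on D t \<and> bij_betw t D UNIV \<and>
            (\<forall>v q. q \<in> {0..1} \<longrightarrow>
               q * \<Phi> v + (1 - q) * \<Phi> (- v)
                 - (INF v'. q * \<Phi> v' + (1 - q) * \<Phi> (- v'))
               = bregman h h' q (inv_into D t v)))"
proof
  assume "\<exists>(D :: real set) (h :: real \<Rightarrow> real) (h' :: real \<Rightarrow> real) (t :: real \<Rightarrow> real).
            convex D \<and> {0..1} \<subseteq> D \<and>
            strict_convex_on D h \<and>
            (\<forall>x\<in>D. (h has_real_derivative h' x) (at x within D)) \<and>
            continuous_on D t \<and> bij_betw t D UNIV \<and>
            (\<forall>v q. q \<in> {0..1} \<longrightarrow>
               q * \<Phi> v + (1 - q) * \<Phi> (- v)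
                 - (INF v'. q * \<Phi> v' + (1 - q) * \<Phi> (- v'))
               = bregman h h' q (inv_into D t v))"
  then obtain D h h' t where conv: "convex D" and sub: "{0..1} \<subseteq> D"
    and sc: "strict_convex_on D h"
    and der: "\<forall>x\<in>D. (h has_real_derivative h' x) (at x within D)"
    and bij: "bij_betw t D UNIV"
    and eq: "\<forall>v q. q \<in> {0..1} \<longrightarrow>
               q * \<Phi> v + (1 - q) * \<Phi> (- v)
                 - (INF v'. q * \<Phi> v' + (1 - q) * \<Phi> (- v'))
               = bregman h h' q (inv_into D t v)"
    by blast
  have nn: "\<And>v. \<Phi> v \<ge> 0" and z: "\<And>v. v \<ge> 1 \<Longrightarrow> \<Phi> v = 0"
    using Phi_props[OF assms] by auto
  have inf: "(INF v'. 1 * \<Phi> v' + (1 - 1) * \<Phi> (- v')) = 0"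
    using cInf_eq_minimum[of 0 "range \<Phi>"] nn z[of 1] by force
  have surj: "t ` D = UNIV" using bij by (simp add: bij_betw_def)
  have one: "inv_into D t v = 1" if "v \<ge> 1" for v
  proof (rule ccontr)
    assume ne: "inv_into D t v \<noteq> 1"
    have bD: "inv_into D t v \<in> D" using inv_into_into[of v t D] surj by simp
    have "bregman h h' 1 (inv_into D t v) > 0"
      using bregman_pos[OF sc conv _ bD _ der, of 1] sub ne by (metis atLeastAtMost_iff order_refl subsetD zero_le_one)
    moreover have "bregman h h' 1 (inv_into D t v) = 0"
      using eq[rule_format, of 1 v] inf z[OF that] by simp
    ultimately show False by simp
  qed
  have "t (inv_into D t 1) = 1" "t (inv_into D t 2) = 2"
    using f_inv_into_f[of _ t D] surj by auto
  then show False using one[of 1] one[of 2] by simp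
qed

end
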